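(* Let $T$ be the log-partition function of a regular minimal exponential family and let the market cost function be $C=T$ (the generalized LMSR). Suppose an agent has exponential utility $U_a(w)=-\frac1a e^{-aw}$ with $a>0$ and belief $p(\cdot;\hat\theta)$ with $\hat\theta\in\Theta$, and the current market state is $\theta\in\Theta$. Then the portfolio $\delta$ maximizing the agent's expected utility of profit $\langle\delta,\phi(x)\rangle-[C(\theta+\delta)-C(\theta)]$ is unique, equal to $\delta=(\hat\theta-\theta)/(1+a)$, so that the new state is $\theta+\delta=\frac{1}{1+a}\hat\theta+\frac{a}{1+a}\theta$.
   Context: Exponential family with sufficient statistic $\phi:\mathcal{X}\to\mathbb{R}^d$ and base measure $\nu$: $p(x;\theta)=\exp(\langle\theta,\phi(x)\rangle-T(\theta))$, $T(\theta)=\log\int_{\mathcal{X}}\exp\langle\theta,\phi(x)\rangle\,d\nu(x)$, $\Theta=\{\theta:T(\theta)<\infty\}$, assumed open (regular) and with no nonzero $\alpha$ making $\langle\alpha,\phi\rangle$ constant $\nu$-a.e. (minimal). In a cost-function market with cost $C$, buying portfolio $\delta$ at state $\theta$ costs $C(\theta+\delta)-C(\theta)$, moves the state to $\theta+\delta$, and pays $\langle\delta,\phi(x)\rangle$ when outcome $x$ occurs. *)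

theory Defs
  imports "HOL-Analysis.Analysis"
begin

definition part_int :: "'x measure \<Rightarrow> ('x \<Rightarrow> 'b::euclidean_space) \<Rightarrow> 'b \<Rightarrow> ennreal" where
  "part_int \<nu> \<phi> \<theta> = (\<integral>\<^sup>+ x. ennreal (exp (\<theta> \<bullet> \<phi> x)) \<partial>\<nu>)"

definition logpart :: "'x measure \<Rightarrow> ('x \<Rightarrow> 'b::euclidean_space) \<Rightarrow> 'b \<Rightarrow> real" where
  "logpart \<nu> \<phi> \<theta> = ln (enn2real (part_int \<nu> \<phi> \<theta>))"

definition natparam :: "'x measure \<Rightarrow> ('x \<Rightarrow> 'b::euclidean_space) \<Rightarrow> 'b set" where
  "natparam \<nu> \<phi> = {\<theta>. part_int \<nu> \<phi> \<theta> < \<infinity>}"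

definition regular_fam :: "'x measure \<Rightarrow> ('x \<Rightarrow> 'b::euclidean_space) \<Rightarrow> bool" where
  "regular_fam \<nu> \<phi> \<longleftrightarrow> open (natparam \<nu> \<phi>)"

definition minimal_fam :: "'x measure \<Rightarrow> ('x \<Rightarrow> 'b::euclidean_space) \<Rightarrow> bool" where
  "minimal_fam \<nu> \<phi> \<longleftrightarrow> (\<forall>\<alpha>. \<alpha> \<noteq> 0 \<longrightarrow> \<not> (\<exists>c. AE x in \<nu>. \<alpha> \<bullet> \<phi> x = c))"

definition expfam_dens :: "'x measure \<Rightarrow> ('x \<Rightarrow> 'b::euclidean_space) \<Rightarrow> 'b \<Rightarrow> 'x \<Rightarrow> real" where
  "expfam_dens \<nu> \<phi> \<theta> x = exp (\<theta> \<bullet> \<phi> x - logpart \<nu> \<phi> \<theta>)"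

definition exp_utility :: "real \<Rightarrow> real \<Rightarrow> real" where
  "exp_utility a w = - (1 / a) * exp (- a * w)"

definition profit :: "('b::euclidean_space \<Rightarrow> real) \<Rightarrow> ('x \<Rightarrow> 'b) \<Rightarrow> 'b \<Rightarrow> 'b \<Rightarrow> 'x \<Rightarrow> real" where
  "profit C \<phi> \<theta> \<delta> x = \<delta> \<bullet> \<phi> x - (C (\<theta> + \<delta>) - C \<theta>)"

text \<open>Since the utility is negative, the expectation is taken as minus the (possibly infinite)
  nonnegative integral of -U, giving a value in the extended reals (possibly -infinity).\<close>
definition expected_utility ::
  "'x measure \<Rightarrow> ('x \<Rightarrow> 'b::euclidean_space) \<Rightarrow> real \<Rightarrow> 'b \<Rightarrow> 'b \<Rightarrow> 'b \<Rightarrow> ereal" where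
  "expected_utility \<nu> \<phi> a \<theta>hat \<theta> \<delta> =
     - enn2ereal (\<integral>\<^sup>+ x. ennreal (- exp_utility a (profit (logpart \<nu> \<phi>) \<phi> \<theta> \<delta> x)
                                   * expfam_dens \<nu> \<phi> \<theta>hat x) \<partial>\<nu>)"

end

theory Submission imports Defs begin

lemma exp_lt1: "x \<noteq> 0 \<Longrightarrow> 1 + x < exp (x::real)"
  using exp_minus_greater[of "-x"] by simp

lemma exp_strict_conv:
  fixes u v p :: real
  assumes "0 < p" "p < 1" "u \<noteq> v"
  shows "exp (p* u + (1-p)* v) < p * exp u + (1-p) * exp v"
proof -
  let ?w = "u - v"
  have e1: "1 + (1-p)*?w < exp ((1-p)*?w)" using assms by (intro exp_lt1) auto
  have e2: "1 + (-p*?w) < exp (-p*?w)" using assms by (intro exp_lt1) auto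
  have "1 < p * exp ((1-p)*?w) + (1-p) * exp (-p*?w)"
  proof -
    have "p * (1 + (1-p)*?w) < p * exp ((1-p)*?w)" using e1 assms by simp
    moreover have "(1-p) * (1 + (-p*?w)) < (1-p) * exp (-p*?w)" using e2 assms by simp
    ultimately show ?thesis by (simp add: algebra_simps)
  qed
  hence "exp (p* u + (1-p)* v) * 1 < exp (p* u + (1-p)* v) * (p * exp ((1-p)*?w) + (1-p) * exp (-p*?w))"
    by simp
  also have "\<dots> = p * exp u + (1-p) * exp v"
    by (simp add: distrib_left mult.left_commute flip: exp_add) (simp add: algebra_simps)
  finally show ?thesis by simp
qed

lemma exp_conv:
  fixes u v p :: real
  assumes "0 < p" "p < 1"
  shows "exp (p* u + (1-p)* v) \<le> p * exp u + (1-p) * exp v"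
  using exp_strict_conv[OF assms, of u v] by (cases "u = v") (auto simp flip: distrib_right)

lemma meas: assumes [measurable]: "(\<phi>::'x \<Rightarrow> 'b::euclidean_space) \<in> borel_measurable \<nu>" shows "(\<lambda>x. ennreal (exp (v \<bullet> \<phi> x))) \<in> borel_measurable \<nu>"
  by measurable

lemma nonnull: assumes "minimal_fam \<nu> (\<phi>::'x \<Rightarrow> 'b::euclidean_space)" shows "\<not> (AE x in \<nu>. False)"
proof
  assume "AE x in \<nu>. False"
  hence "AE x in \<nu>. (SOME b. b \<in> (Basis::'b set)) \<bullet> \<phi> x = 0" by auto
  moreover have "(SOME b. b \<in> (Basis::'b set)) \<noteq> 0"
    by (metis nonempty_Basis some_in_eq zero_not_in_Basis)
  ultimately show False using assms unfolding minimal_fam_def by blast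
qed

lemma Zpos: assumes "minimal_fam \<nu> \<phi>" "\<phi> \<in> borel_measurable \<nu>"
  shows "part_int \<nu> \<phi> v > 0"
proof (rule ccontr)
  assume "\<not> ?thesis"
  hence "part_int \<nu> \<phi> v = 0" by (simp add: zero_less_iff_neq_zero)
  hence "AE x in \<nu>. ennreal (exp (v \<bullet> \<phi> x)) = 0"
    unfolding part_int_def using nn_integral_0_iff_AE[OF meas[OF assms(2)]] by simp
  hence "AE x in \<nu>. False" by simp
  thus False using nonnull[OF assms(1)] by simp
qed


lemma Zfin: assumes "minimal_fam \<nu> \<phi>" "\<phi> \<in> borel_measurable \<nu>" "v \<in> natparam \<nu> \<phi>"
  shows "enn2real (part_int \<nu> \<phi> v) > 0" "part_int \<nu> \<phi> v = ennreal (enn2real (part_int \<nu> \<phi> v))"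
  using Zpos[OF assms(1,2), of v] assms(3) unfolding natparam_def
  by (auto simp: enn2real_positive_iff ennreal_enn2real)

lemma key:
  fixes \<phi> :: "'x \<Rightarrow> 'b::euclidean_space"
  assumes mphi[measurable]: "\<phi> \<in> borel_measurable \<nu>" and mini: "minimal_fam \<nu> \<phi>"
    and eta: "\<eta> \<in> natparam \<nu> \<phi>" and xi: "\<xi> \<in> natparam \<nu> \<phi>" and p: "0 < p" "p < 1"
  defines "A \<equiv> enn2real (part_int \<nu> \<phi> \<eta>)" and "B \<equiv> enn2real (part_int \<nu> \<phi> \<xi>)"
  shows "part_int \<nu> \<phi> (p *\<^sub>R \<eta> + (1-p) *\<^sub>R \<xi>) \<le> ennreal (A powr p * B powr (1-p))"
    and "\<eta> \<noteq> \<xi> \<Longrightarrow> part_int \<nu> \<phi> (p *\<^sub>R \<eta> + (1-p) *\<^sub>R \<xi>) < ennreal (A powr p * B powr (1-p))"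
proof -
  have A: "A > 0" "part_int \<nu> \<phi> \<eta> = ennreal A" using Zfin[OF mini mphi eta] A_def by auto
  have B: "B > 0" "part_int \<nu> \<phi> \<xi> = ennreal B" using Zfin[OF mini mphi xi] B_def by auto
  define C where "C = A powr p * B powr (1-p)"
  have C: "C > 0" using A B by (simp add: C_def)
  define u where "u x = \<eta> \<bullet> \<phi> x - ln A" for x
  define v where "v x = \<xi> \<bullet> \<phi> x - ln B" for x
  define w where "w = p *\<^sub>R \<eta> + (1-p) *\<^sub>R \<xi>"
  have norm: "(\<integral>\<^sup>+ x. ennreal (exp (\<zeta> \<bullet> \<phi> x - ln D)) \<partial>\<nu>) = 1"
    if "D > 0" "part_int \<nu> \<phi> \<zeta> = ennreal D" for \<zeta> D
  proof -
    have "(\<integral>\<^sup>+ x. ennreal (exp (\<zeta> \<bullet> \<phi> x - ln D)) \<partial>\<nu>)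
        = (\<integral>\<^sup>+ x. ennreal (exp (\<zeta> \<bullet> \<phi> x)) * ennreal (1/D) \<partial>\<nu>)"
      using that by (intro nn_integral_cong) (simp add: exp_diff divide_inverse ennreal_mult)
    also have "\<dots> = part_int \<nu> \<phi> \<zeta> * ennreal (1/D)"
      unfolding part_int_def by (rule nn_integral_multc) measurable
    also have "\<dots> = 1" using that(1) by (simp only: that(2)) (subst ennreal_mult[symmetric]; auto)
    finally show ?thesis .
  qed
  have hu: "(\<integral>\<^sup>+ x. ennreal (exp (u x)) \<partial>\<nu>) = 1" unfolding u_def using norm A by simp
  have hv: "(\<integral>\<^sup>+ x. ennreal (exp (v x)) \<partial>\<nu>) = 1" unfolding v_def using norm B by simp
  have mu[measurable]: "u \<in> borel_measurable \<nu>" "v \<in> borel_measurable \<nu>" unfolding u_def[abs_def] v_def[abs_def] by measurable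
  have hg: "(\<integral>\<^sup>+ x. ennreal (p * exp (u x) + (1-p) * exp (v x)) \<partial>\<nu>) = 1"
  proof -
    have "(\<integral>\<^sup>+ x. ennreal (p * exp (u x) + (1-p) * exp (v x)) \<partial>\<nu>)
       = (\<integral>\<^sup>+ x. ennreal p * ennreal (exp (u x)) + ennreal (1-p) * ennreal (exp (v x)) \<partial>\<nu>)"
      using p by (intro nn_integral_cong) (subst ennreal_plus, simp, simp, simp add: ennreal_mult)
    also have "\<dots> = ennreal p * (\<integral>\<^sup>+ x. ennreal (exp (u x)) \<partial>\<nu>) + ennreal (1-p) * (\<integral>\<^sup>+ x. ennreal (exp (v x)) \<partial>\<nu>)"
      by (subst nn_integral_add) (auto simp: nn_integral_cmult)
    also have "\<dots> = 1" using p by (simp add: hu hv) (subst ennreal_plus[symmetric]; simp)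
    finally show ?thesis .
  qed
  have fw: "exp (p * u x + (1-p) * v x) = exp (w \<bullet> \<phi> x) * (1/C)" for x
  proof -
    have "p * u x + (1-p) * v x = w \<bullet> \<phi> x - (p * ln A + (1-p) * ln B)"
      unfolding u_def v_def w_def by (simp add: inner_add_left algebra_simps)
    moreover have "exp (p * ln A + (1-p) * ln B) = C"
      using A B by (simp add: C_def powr_def exp_add mult.commute)
    ultimately show ?thesis by (simp add: exp_diff divide_inverse)
  qed
  have hf: "(\<integral>\<^sup>+ x. ennreal (exp (p * u x + (1-p) * v x)) \<partial>\<nu>) = part_int \<nu> \<phi> w * ennreal (1/C)"
  proof -
    have "(\<integral>\<^sup>+ x. ennreal (exp (p * u x + (1-p) * v x)) \<partial>\<nu>) = (\<integral>\<^sup>+ x. ennreal (exp (w \<bullet> \<phi> x)) * ennreal (1/C) \<partial>\<nu>)"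
      using C by (intro nn_integral_cong) (simp only: fw, rule ennreal_mult, auto)
    also have "\<dots> = part_int \<nu> \<phi> w * ennreal (1/C)"
      unfolding part_int_def by (rule nn_integral_multc) measurable
    finally show ?thesis .
  qed
  have hback: "part_int \<nu> \<phi> w * ennreal (1/C) * ennreal C = part_int \<nu> \<phi> w"
  proof -
    have "ennreal (1/C) * ennreal C = 1" using C by (subst ennreal_mult[symmetric]) auto
    thus ?thesis by (simp add: mult.assoc)
  qed
  have le: "(\<integral>\<^sup>+ x. ennreal (exp (p * u x + (1-p) * v x)) \<partial>\<nu>) \<le> 1"
    unfolding hg[symmetric] by (intro nn_integral_mono ennreal_leI exp_conv[OF p])
  hence "part_int \<nu> \<phi> w * ennreal (1/C) * ennreal C \<le> 1 * ennreal C"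
    unfolding hf by (intro mult_right_mono) auto
  thus "part_int \<nu> \<phi> (p *\<^sub>R \<eta> + (1-p) *\<^sub>R \<xi>) \<le> ennreal (A powr p * B powr (1-p))"
    using hback by (simp add: w_def C_def)
  assume ne: "\<eta> \<noteq> \<xi>"
  have lt: "(\<integral>\<^sup>+ x. ennreal (exp (p * u x + (1-p) * v x)) \<partial>\<nu>) < 1"
    unfolding hg[symmetric]
  proof (rule nn_integral_less)
    show "(\<integral>\<^sup>+ x. ennreal (exp (p * u x + (1-p) * v x)) \<partial>\<nu>) \<noteq> \<infinity>" using le
      by (auto simp: top_unique)
    show "AE x in \<nu>. ennreal (exp (p * u x + (1-p) * v x)) \<le> ennreal (p * exp (u x) + (1-p) * exp (v x))"
      by (intro AE_I2 ennreal_leI exp_conv[OF p])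
    show "\<not> (AE x in \<nu>. ennreal (p * exp (u x) + (1-p) * exp (v x)) \<le> ennreal (exp (p * u x + (1-p) * v x)))"
    proof
      assume "AE x in \<nu>. ennreal (p * exp (u x) + (1-p) * exp (v x)) \<le> ennreal (exp (p * u x + (1-p) * v x))"
      hence "AE x in \<nu>. u x = v x"
      proof (rule eventually_mono)
        fix x assume h: "ennreal (p * exp (u x) + (1-p) * exp (v x)) \<le> ennreal (exp (p * u x + (1-p) * v x))"
        show "u x = v x"
        proof (rule ccontr)
          assume "u x \<noteq> v x"
          from exp_strict_conv[OF p this] have s1: "exp (p * u x + (1-p) * v x) < p * exp (u x) + (1-p) * exp (v x)" .
          thus False using h s1 by simp
        qed
      qed
      hence "AE x in \<nu>. (\<eta> - \<xi>) \<bullet> \<phi> x = ln A - ln B"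
        by eventually_elim (simp add: u_def v_def inner_diff_left)
      moreover have "\<eta> - \<xi> \<noteq> 0" using ne by simp
      ultimately show False using mini unfolding minimal_fam_def by blast
    qed
  qed measurable
  have "part_int \<nu> \<phi> w * ennreal (1/C) * ennreal C < 1 * ennreal C"
  proof (rule ennreal_mult_strict_right_mono)
    show "part_int \<nu> \<phi> w * ennreal (1/C) < 1" using lt hf by simp
  qed (use C in auto)
  thus "part_int \<nu> \<phi> (p *\<^sub>R \<eta> + (1-p) *\<^sub>R \<xi>) < ennreal (A powr p * B powr (1-p))"
    using hback by (simp add: w_def C_def)
qed


lemma EU_le_iff: "expected_utility \<nu> \<phi> a th t d' \<le> expected_utility \<nu> \<phi> a th t d \<longleftrightarrow>
   (\<integral>\<^sup>+ x. ennreal (- exp_utility a (profit (logpart \<nu> \<phi>) \<phi> t d x) * expfam_dens \<nu> \<phi> th x) \<partial>\<nu>)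
 \<le> (\<integral>\<^sup>+ x. ennreal (- exp_utility a (profit (logpart \<nu> \<phi>) \<phi> t d' x) * expfam_dens \<nu> \<phi> th x) \<partial>\<nu>)"
  unfolding expected_utility_def by (simp add: less_eq_ennreal.rep_eq)

lemma Iform:
  fixes \<phi> :: "'x \<Rightarrow> 'b::euclidean_space"
  assumes [measurable]: "\<phi> \<in> borel_measurable \<nu>" and a: "a > 0"
  shows "(\<integral>\<^sup>+ x. ennreal (- exp_utility a (profit (logpart \<nu> \<phi>) \<phi> t d x) * expfam_dens \<nu> \<phi> th x) \<partial>\<nu>)
    = ennreal ((1/a) * exp (a * (logpart \<nu> \<phi> (t + d) - logpart \<nu> \<phi> t) - logpart \<nu> \<phi> th))
      * part_int \<nu> \<phi> (th - a *\<^sub>R d)"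
proof -
  let ?K = "(1/a) * exp (a * (logpart \<nu> \<phi> (t + d) - logpart \<nu> \<phi> t) - logpart \<nu> \<phi> th)"
  have pt: "- exp_utility a (profit (logpart \<nu> \<phi>) \<phi> t d x) * expfam_dens \<nu> \<phi> th x
      = ?K * exp ((th - a *\<^sub>R d) \<bullet> \<phi> x)" for x
  proof -
    have "- exp_utility a (profit (logpart \<nu> \<phi>) \<phi> t d x) * expfam_dens \<nu> \<phi> th x
       = (1/a) * (exp (- a * (d \<bullet> \<phi> x - (logpart \<nu> \<phi> (t + d) - logpart \<nu> \<phi> t))) * exp (th \<bullet> \<phi> x - logpart \<nu> \<phi> th))"
      unfolding exp_utility_def profit_def expfam_dens_def by simp
    also have "\<dots> = (1/a) * exp (- a * (d \<bullet> \<phi> x - (logpart \<nu> \<phi> (t + d) - logpart \<nu> \<phi> t)) + (th \<bullet> \<phi> x - logpart \<nu> \<phi> th))"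
      by (simp only: exp_add)
    also have "- a * (d \<bullet> \<phi> x - (logpart \<nu> \<phi> (t + d) - logpart \<nu> \<phi> t)) + (th \<bullet> \<phi> x - logpart \<nu> \<phi> th)
       = (a * (logpart \<nu> \<phi> (t + d) - logpart \<nu> \<phi> t) - logpart \<nu> \<phi> th) + (th - a *\<^sub>R d) \<bullet> \<phi> x"
      by (simp add: inner_diff_left algebra_simps)
    finally show ?thesis by (simp add: exp_add)
  qed
  have "(\<integral>\<^sup>+ x. ennreal (- exp_utility a (profit (logpart \<nu> \<phi>) \<phi> t d x) * expfam_dens \<nu> \<phi> th x) \<partial>\<nu>)
     = (\<integral>\<^sup>+ x. ennreal ?K * ennreal (exp ((th - a *\<^sub>R d) \<bullet> \<phi> x)) \<partial>\<nu>)"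
    using a by (intro nn_integral_cong) (simp only: pt, rule ennreal_mult, auto)
  also have "\<dots> = ennreal ?K * part_int \<nu> \<phi> (th - a *\<^sub>R d)"
    unfolding part_int_def by (rule nn_integral_cmult) measurable
  finally show ?thesis .
qed

theorem theorem3:
  fixes \<nu> :: "'x measure" and \<phi> :: "'x \<Rightarrow> 'b::euclidean_space"
    and a :: real and \<theta>hat \<theta> :: 'b
  assumes "\<phi> \<in> borel_measurable \<nu>"
    and "regular_fam \<nu> \<phi>" and "minimal_fam \<nu> \<phi>"
    and "a > 0"
    and "\<theta>hat \<in> natparam \<nu> \<phi>" and "\<theta> \<in> natparam \<nu> \<phi>"
  shows "{\<delta>. \<theta> + \<delta> \<in> natparam \<nu> \<phi> \<and>
            (\<forall>\<delta>'. \<theta> + \<delta>' \<in> natparam \<nu> \<phi> \<longrightarrow>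
                  expected_utility \<nu> \<phi> a \<theta>hat \<theta> \<delta>' \<le> expected_utility \<nu> \<phi> a \<theta>hat \<theta> \<delta>)}
         = {(1 / (1 + a)) *\<^sub>R (\<theta>hat - \<theta>)}
       \<and> \<theta> + (1 / (1 + a)) *\<^sub>R (\<theta>hat - \<theta>) = (1 / (1 + a)) *\<^sub>R \<theta>hat + (a / (1 + a)) *\<^sub>R \<theta>"
proof -
  note mphi = assms(1) and mini = assms(3) and a = assms(4) and th = assms(5) and t = assms(6)
  define Z where "Z = part_int \<nu> \<phi>"
  define T where "T = logpart \<nu> \<phi>"
  define I where "I d = (\<integral>\<^sup>+ x. ennreal (- exp_utility a (profit (logpart \<nu> \<phi>) \<phi> \<theta> d x) * expfam_dens \<nu> \<phi> \<theta>hat x) \<partial>\<nu>)" for d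
  define K where "K d = (1/a) * exp (a * (T (\<theta> + d) - T \<theta>) - T \<theta>hat)" for d
  have IK: "I d = ennreal (K d) * Z (\<theta>hat - a *\<^sub>R d)" for d
    unfolding I_def K_def Z_def T_def using Iform[OF mphi a] by simp
  have Kpos: "K d > 0" for d using a by (simp add: K_def)
  define q where "q = 1 / (1 + a)"
  define ds where "ds = q *\<^sub>R (\<theta>hat - \<theta>)"
  define es where "es = \<theta> + ds"
  have q: "0 < q" "q < 1" using a by (auto simp: q_def)
  have es_conv: "es = q *\<^sub>R \<theta>hat + (1 - q) *\<^sub>R \<theta>"
    unfolding es_def ds_def by (simp add: algebra_simps)
  have es_ds: "\<theta>hat - a *\<^sub>R ds = es"
  proof -
    have "a * q = 1 - q" using a by (simp add: q_def field_simps)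
    hence "\<theta>hat - a *\<^sub>R ds = \<theta>hat - (1 - q) *\<^sub>R (\<theta>hat - \<theta>)" unfolding ds_def by simp
    thus ?thesis unfolding es_def ds_def by (simp add: algebra_simps)
  qed
  have es_in: "es \<in> natparam \<nu> \<phi>"
    using key(1)[OF mphi mini th t q] unfolding es_conv natparam_def
    by (simp add: le_less_trans[OF _ ennreal_less_top])
  have Zes: "enn2real (Z es) > 0" "Z es = ennreal (enn2real (Z es))"
    using Zfin[OF mini mphi es_in] by (auto simp: Z_def)
  have strict: "I ds < I d'" if d': "\<theta> + d' \<in> natparam \<nu> \<phi>" "d' \<noteq> ds" for d'
  proof (cases "Z (\<theta>hat - a *\<^sub>R d') = \<infinity>")
    case True
    have "I ds = ennreal (K ds * enn2real (Z es))" unfolding IK es_ds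
      using Zes Kpos[of ds] by (metis ennreal_mult' less_imp_le)
    also have "\<dots> < \<infinity>" by simp
    also have "\<infinity> = I d'" unfolding IK True using Kpos[of d'] by (simp add: ennreal_mult_top)
    finally show ?thesis .
  next
    case False
    define e' where "e' = \<theta> + d'"
    define x' where "x' = \<theta>hat - a *\<^sub>R d'"
    have x'in: "x' \<in> natparam \<nu> \<phi>" using False unfolding x'_def natparam_def Z_def by (simp add: less_top)
    define p where "p = a / (1 + a)"
    have p: "0 < p" "p < 1" using a by (auto simp: p_def)
    have pq: "1 - p = q" using a by (simp add: p_def q_def field_simps)
    have conv: "p *\<^sub>R e' + (1 - p) *\<^sub>R x' = es"
    proof -
      have hp: "p = 1 - q" using pq by simp
      have z: "p - q * a = 0" using a by (simp add: p_def q_def field_simps)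
      have "p *\<^sub>R e' + (1 - p) *\<^sub>R x' = p *\<^sub>R \<theta> + q *\<^sub>R \<theta>hat + (p - q * a) *\<^sub>R d'"
        unfolding e'_def x'_def pq by (simp add: algebra_simps)
      also have "\<dots> = p *\<^sub>R \<theta> + q *\<^sub>R \<theta>hat" using z by simp
      also have "\<dots> = es" unfolding es_conv hp by simp
      finally show ?thesis .
    qed
    have ne: "e' \<noteq> x'"
    proof
      assume "e' = x'"
      hence "es = e'" using conv[symmetric] by (simp add: scaleR_add_left[symmetric])
      thus False using d'(2) unfolding es_def e'_def by simp
    qed
    define A where "A = enn2real (Z e')"
    define B where "B = enn2real (Z x')"
    have A: "A > 0" "Z e' = ennreal A" using Zfin[OF mini mphi d'(1)] by (auto simp: A_def Z_def e'_def)
    have B: "B > 0" "Z x' = ennreal B" using Zfin[OF mini mphi x'in] by (auto simp: B_def Z_def)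
    define zs where "zs = enn2real (Z es)"
    have zs: "zs > 0" "Z es = ennreal zs" using Zes by (auto simp: zs_def)
    have lt0: "zs < A powr p * B powr (1-p)"
      using key(2)[OF mphi mini d'(1)[folded e'_def] x'in p ne] conv zs A B
      by (simp add: Z_def A_def B_def ennreal_less_iff)
    have lt1: "zs powr (1 + a) < A powr a * B"
    proof -
      have "zs powr (1 + a) < (A powr p * B powr (1-p)) powr (1 + a)"
        using lt0 zs a by (intro powr_less_mono2) auto
      also have "\<dots> = A powr a * B"
      proof -
        have e1: "p * (1 + a) = a" "(1 - p) * (1 + a) = 1" using a by (simp_all add: p_def field_simps)
        show ?thesis using A B by (simp add: powr_mult powr_powr e1)
      qed
      finally show ?thesis .
    qed
    define E where "E = (1/a) * exp (- a * T \<theta> - T \<theta>hat)"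
    have E: "E > 0" using a by (simp add: E_def)
    have Tz: "T es = ln zs" "T e' = ln A"
      unfolding T_def logpart_def zs_def A_def Z_def by simp_all
    have "I ds = ennreal (K ds * zs)" unfolding IK es_ds using zs Kpos[of ds]
      by (simp add: ennreal_mult)
    also have "K ds * zs = E * zs powr (1 + a)"
    proof -
      have "K ds = E * exp (a * T es)" unfolding K_def E_def es_def
        by (simp add: algebra_simps flip: exp_add)
      also have "exp (a * T es) = zs powr a" using zs by (simp add: Tz powr_def)
      finally show ?thesis using zs by (simp add: powr_add)
    qed
    also have "ennreal (E * zs powr (1 + a)) < ennreal (E * (A powr a * B))"
      using lt1 E by (simp add: ennreal_less_iff)
    also have "E * (A powr a * B) = K d' * B"
    proof -
      have "K d' = E * exp (a * T e')" unfolding K_def E_def e'_def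
        by (simp add: algebra_simps flip: exp_add)
      also have "exp (a * T e') = A powr a" using A by (simp add: Tz powr_def)
      finally show ?thesis by simp
    qed
    also have "ennreal (K d' * B) = I d'" unfolding IK x'_def[symmetric] using B Kpos[of d']
      by (simp add: ennreal_mult)
    finally show ?thesis .
  qed
  have ds_in: "\<theta> + ds \<in> natparam \<nu> \<phi>" using es_in es_def by simp
  have EUle: "expected_utility \<nu> \<phi> a \<theta>hat \<theta> d' \<le> expected_utility \<nu> \<phi> a \<theta>hat \<theta> d \<longleftrightarrow> I d \<le> I d'" for d d'
    unfolding I_def by (rule EU_le_iff)
  have seteq: "{\<delta>. \<theta> + \<delta> \<in> natparam \<nu> \<phi> \<and>
            (\<forall>\<delta>'. \<theta> + \<delta>' \<in> natparam \<nu> \<phi> \<longrightarrow>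
                  expected_utility \<nu> \<phi> a \<theta>hat \<theta> \<delta>' \<le> expected_utility \<nu> \<phi> a \<theta>hat \<theta> \<delta>)} = {ds}"
  proof (intro set_eqI iffI)
    fix d assume "d \<in> {\<delta>. \<theta> + \<delta> \<in> natparam \<nu> \<phi> \<and>
            (\<forall>\<delta>'. \<theta> + \<delta>' \<in> natparam \<nu> \<phi> \<longrightarrow>
                  expected_utility \<nu> \<phi> a \<theta>hat \<theta> \<delta>' \<le> expected_utility \<nu> \<phi> a \<theta>hat \<theta> \<delta>)}"
    hence d: "\<theta> + d \<in> natparam \<nu> \<phi>" "I d \<le> I ds" using ds_in EUle by auto
    show "d \<in> {ds}"
    proof (rule ccontr)
      assume "d \<notin> {ds}"
      hence "I ds < I d" using strict d(1) by auto
      thus False using d(2) by simp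
    qed
  next
    fix d assume "d \<in> {ds}"
    hence dd: "d = ds" by simp
    have "I ds \<le> I d'" if "\<theta> + d' \<in> natparam \<nu> \<phi>" for d'
      using strict[OF that] by (cases "d' = ds") auto
    thus "d \<in> {\<delta>. \<theta> + \<delta> \<in> natparam \<nu> \<phi> \<and>
            (\<forall>\<delta>'. \<theta> + \<delta>' \<in> natparam \<nu> \<phi> \<longrightarrow>
                  expected_utility \<nu> \<phi> a \<theta>hat \<theta> \<delta>' \<le> expected_utility \<nu> \<phi> a \<theta>hat \<theta> \<delta>)}"
      using dd ds_in EUle by auto
  qed
  have last: "\<theta> + (1 / (1 + a)) *\<^sub>R (\<theta>hat - \<theta>) = (1 / (1 + a)) *\<^sub>R \<theta>hat + (a / (1 + a)) *\<^sub>R \<theta>"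
  proof -
    have "1 / (1 + a) + a / (1 + a) = 1" using a by (simp add: field_simps)
    hence h: "(1 / (1 + a)) *\<^sub>R \<theta> + (a / (1 + a)) *\<^sub>R \<theta> = \<theta>"
      by (simp only: scaleR_add_left[symmetric] scaleR_one)
    show ?thesis by (subst h[symmetric]) (simp add: algebra_simps)
  qed
  show ?thesis using seteq last unfolding ds_def q_def by simp
qed

end
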